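(* Let $\varphi:\mathbb{R}^n\to\mathbb{R}$ be of class $\mathcal C^{1,1}$ around its tilt-stable local minimizer $\bar x$. Then there is a neighborhood $O$ of $\bar x$ such that the set $\Upsilon(x):=\{y\in\mathbb{R}^n: -\nabla\varphi(x)\in D\nabla\varphi(x)(y)\}$ is nonempty and compact for all $x\in O$.
   Context: $\mathcal C^{1,1}$ near $\bar x$: differentiable with locally Lipschitz gradient near $\bar x$. Tangent cone $T_\Omega(\bar x)=\{w:\exists t_k\downarrow0,w_k\to w,\bar x+t_kw_k\in\Omega\}$; graphical derivative of single-valued $f$: $Df(x)(u)=\{w:(u,w)\in T_{\operatorname{gph}f}(x,f(x))\}$. $\bar x$ is a tilt-stable local minimizer of $\varphi$ if for some $\gamma>0$ the mapping $M_\gamma(v)=\operatorname{argmin}\{\varphi(x)-\langle v,x\rangle:x\in\mathbb B_\gamma(\bar x)\}$ is single-valued and Lipschitz continuous on a neighborhood of $0$, with $M_\gamma(0)=\{\bar x\}$. *)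

theory Defs
  imports "HOL-Analysis.Analysis"
begin

definition grad :: "('a::euclidean_space \<Rightarrow> real) \<Rightarrow> 'a \<Rightarrow> 'a" where
  "grad f x = (\<Sum>b\<in>Basis. frechet_derivative f (at x) b *\<^sub>R b)"

definition C11_near :: "('a::euclidean_space \<Rightarrow> real) \<Rightarrow> 'a \<Rightarrow> bool" where
  "C11_near f xbar \<longleftrightarrow> (\<exists>U. open U \<and> xbar \<in> U \<and>
     (\<forall>x\<in>U. f differentiable (at x)) \<and>
     (\<forall>x\<in>U. \<exists>r>0. \<exists>L. L-lipschitz_on (ball x r \<inter> U) (grad f)))"

definition tangent_cone :: "'a::real_normed_vector set \<Rightarrow> 'a \<Rightarrow> 'a set" where
  "tangent_cone \<Omega> x = {w. \<exists>t ws. (\<forall>k. t k > 0) \<and> t \<longlonglongrightarrow> 0 \<and> ws \<longlonglongrightarrow> w \<and>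
                              (\<forall>k. x + t k *\<^sub>R ws k \<in> \<Omega>)}"

definition graph_of :: "('a \<Rightarrow> 'b) \<Rightarrow> ('a \<times> 'b) set" where
  "graph_of f = {(x, f x) | x. True}"

definition graph_deriv :: "('a::real_normed_vector \<Rightarrow> 'b::real_normed_vector) \<Rightarrow> 'a \<Rightarrow> 'a \<Rightarrow> 'b set" where
  "graph_deriv f x u = {w. (u, w) \<in> tangent_cone (graph_of f) (x, f x)}"

definition tilt_argmin :: "('a::euclidean_space \<Rightarrow> real) \<Rightarrow> 'a \<Rightarrow> real \<Rightarrow> 'a \<Rightarrow> 'a set" where
  "tilt_argmin \<phi> xbar \<gamma> v = {x \<in> cball xbar \<gamma>. \<forall>y\<in>cball xbar \<gamma>. \<phi> x - v \<bullet> x \<le> \<phi> y - v \<bullet> y}"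

definition tilt_stable_min :: "('a::euclidean_space \<Rightarrow> real) \<Rightarrow> 'a \<Rightarrow> bool" where
  "tilt_stable_min \<phi> xbar \<longleftrightarrow> (\<exists>\<gamma>>0. \<exists>V m L. open V \<and> 0 \<in> V \<and>
      (\<forall>v\<in>V. tilt_argmin \<phi> xbar \<gamma> v = {m v}) \<and> L-lipschitz_on V m \<and>
      tilt_argmin \<phi> xbar \<gamma> 0 = {xbar})"

end

theory Submission imports Defs "HOL-Real_Asymp.Real_Asymp" begin

lemma tc_imp:
  assumes "w \<in> tangent_cone \<Omega> x" "e > 0" "d > 0"
  shows "\<exists>t u. 0 < t \<and> t < d \<and> dist u w < e \<and> x + t *\<^sub>R u \<in> \<Omega>"
proof -
  obtain t ws where t: "\<forall>k. t k > 0" "t \<longlonglongrightarrow> 0" "ws \<longlonglongrightarrow> w" "\<forall>k. x + t k *\<^sub>R ws k \<in> \<Omega>"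
    using assms(1) unfolding tangent_cone_def by blast
  have "eventually (\<lambda>k. dist (t k) 0 < d) sequentially" using t(2) assms(3) tendstoD by blast
  moreover have "eventually (\<lambda>k. dist (ws k) w < e) sequentially" using t(3) assms(2) tendstoD by blast
  ultimately obtain k where "dist (t k) 0 < d" "dist (ws k) w < e"
    using eventually_happens'[OF sequentially_bot] eventually_conj by (metis (mono_tags, lifting))
  then show ?thesis using t(1,4) by (intro exI[of _ "t k"] exI[of _ "ws k"]) auto
qed

lemma tc_intro:
  assumes "\<And>e d. e > 0 \<Longrightarrow> d > 0 \<Longrightarrow> \<exists>t u. 0 < t \<and> t < d \<and> dist u w < e \<and> x + t *\<^sub>R u \<in> \<Omega>"
  shows "w \<in> tangent_cone \<Omega> x"
proof -
  have "\<forall>k::nat. \<exists>p. 0 < fst p \<and> fst p < 1/(Suc k) \<and> dist (snd p) w < 1/(Suc k) \<and> x + fst p *\<^sub>R snd p \<in> \<Omega>"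
    using assms by (metis fst_conv snd_conv of_nat_0_less_iff zero_less_Suc divide_pos_pos zero_less_one)
  then obtain p where p: "\<And>k. 0 < fst (p k) \<and> fst (p k) < 1/(Suc k) \<and> dist (snd (p k)) w < 1/(Suc k) \<and> x + fst (p k) *\<^sub>R snd (p k) \<in> \<Omega>"
    by metis
  have lim0: "(\<lambda>k. 1 / real (Suc k)) \<longlonglongrightarrow> 0"
    using LIMSEQ_inverse_real_of_nat by (simp add: inverse_eq_divide)
  have "(\<lambda>k. fst (p k)) \<longlonglongrightarrow> 0"
  proof (rule tendsto_sandwich[OF _ _ tendsto_const lim0])
    show "\<forall>\<^sub>F n in sequentially. 0 \<le> fst (p n)" using p by (simp add: less_imp_le)
    show "\<forall>\<^sub>F n in sequentially. fst (p n) \<le> 1 / real (Suc n)" using p by (simp add: less_imp_le)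
  qed
  moreover have "(\<lambda>k. snd (p k)) \<longlonglongrightarrow> w"
  proof -
    have "(\<lambda>k. dist (snd (p k)) w) \<longlonglongrightarrow> 0"
    proof (rule tendsto_sandwich[OF _ _ tendsto_const lim0])
      show "\<forall>\<^sub>F n in sequentially. 0 \<le> dist (snd (p n)) w" by simp
      show "\<forall>\<^sub>F n in sequentially. dist (snd (p n)) w \<le> 1 / real (Suc n)" using p by (simp add: less_imp_le)
    qed
    then show ?thesis using tendsto_dist_iff by blast
  qed
  ultimately show ?thesis unfolding tangent_cone_def using p
    by (intro CollectI exI[of _ "\<lambda>k. fst (p k)"] exI[of _ "\<lambda>k. snd (p k)"]) auto
qed

lemma tc_closed: "closed (tangent_cone \<Omega> x)"
proof -
  have "w \<in> tangent_cone \<Omega> x" if H: "\<forall>e>0. \<exists>y\<in>tangent_cone \<Omega> x. dist y w < e" for w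
  proof (rule tc_intro)
    fix e d :: real assume "e > 0" "d > 0"
    then obtain y where y: "y \<in> tangent_cone \<Omega> x" "dist y w < e/2" using H by (meson half_gt_zero)
    then obtain t u where "0 < t \<and> t < d \<and> dist u y < e/2 \<and> x + t *\<^sub>R u \<in> \<Omega>"
      using tc_imp[OF y(1)] \<open>e>0\<close> \<open>d>0\<close> by (meson half_gt_zero)
    moreover have "dist u w < e" using calculation y(2) dist_triangle_half_r[of y u e w] by (simp add: dist_commute)
    ultimately show "\<exists>t u. 0 < t \<and> t < d \<and> dist u w < e \<and> x + t *\<^sub>R u \<in> \<Omega>" by blast
  qed
  then show ?thesis using closed_approachable by (metis closure_approachable closed_closure closure_closed closure_subset subsetI subset_antisym)
qed

lemma grad_eq:
  fixes \<phi> :: "'a::euclidean_space \<Rightarrow> real"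
  assumes "\<phi> differentiable (at z)" "\<forall>\<^sub>F y in at z. \<phi> z - v \<bullet> z \<le> \<phi> y - v \<bullet> y"
  shows "grad \<phi> z = v"
proof -
  have d: "((\<lambda>y. \<phi> y - v \<bullet> y) has_derivative (\<lambda>h. frechet_derivative \<phi> (at z) h - v \<bullet> h)) (at z)"
    using assms(1) frechet_derivative_works by (auto intro!: derivative_eq_intros)
  have "(\<lambda>h. frechet_derivative \<phi> (at z) h - v \<bullet> h) = (\<lambda>h. 0)"
    by (rule has_derivative_local_min[OF d assms(2)])
  then have "\<And>h. frechet_derivative \<phi> (at z) h = v \<bullet> h" by (metis eq_iff_diff_eq_0)
  then show ?thesis unfolding grad_def using euclidean_representation[of v] by (simp add: inner_commute)
qed

theorem proposition5p2:
  fixes \<phi> :: "'a::euclidean_space \<Rightarrow> real" and xbar :: 'a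
  assumes "C11_near \<phi> xbar"
    and "tilt_stable_min \<phi> xbar"
  shows "\<exists>N. open N \<and> xbar \<in> N \<and>
           (\<forall>x\<in>N. {y. - grad \<phi> x \<in> graph_deriv (grad \<phi>) x y} \<noteq> {} \<and>
                   compact {y. - grad \<phi> x \<in> graph_deriv (grad \<phi>) x y})"
proof -
  obtain U where U: "open U" "xbar \<in> U" "\<forall>x\<in>U. \<phi> differentiable (at x)"
    using assms(1) unfolding C11_near_def by blast
  obtain \<gamma> V m L where tv: "\<gamma> > 0" "open V" "0 \<in> V" "\<forall>v\<in>V. tilt_argmin \<phi> xbar \<gamma> v = {m v}"
    "L-lipschitz_on V m" "tilt_argmin \<phi> xbar \<gamma> 0 = {xbar}"
    using assms(2) unfolding tilt_stable_min_def by blast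
  define g where "g = grad \<phi>"
  have m0: "m 0 = xbar" using tv(3,4,6) by auto
  have L0: "L \<ge> 0" using tv(5) by (simp add: lipschitz_on_def)
  have mcont: "continuous_on V m" using tv(5) lipschitz_on_continuous_on by blast
  define V' where "V' = V \<inter> m -` (ball xbar \<gamma> \<inter> U)"
  have V'open: "open V'"
  proof -
    have "open (m -` (ball xbar \<gamma> \<inter> U) \<inter> V)"
      using continuous_on_open_vimage[OF tv(2)] mcont U(1) by blast
    then show ?thesis unfolding V'_def by (simp add: Int_commute)
  qed
  have V'0: "0 \<in> V'" unfolding V'_def using m0 tv U by auto
  have gm: "g (m v) = v" if v: "v \<in> V'" for v
  proof -
    have mv: "m v \<in> tilt_argmin \<phi> xbar \<gamma> v" using tv(4) v unfolding V'_def by auto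
    have inb: "m v \<in> ball xbar \<gamma>" "m v \<in> U" using v unfolding V'_def by auto
    have ev: "\<forall>\<^sub>F y in at (m v). y \<in> ball xbar \<gamma>"
      using eventually_at_in_open'[OF open_ball inb(1)] .
    have "\<forall>\<^sub>F y in at (m v). \<phi> (m v) - v \<bullet> m v \<le> \<phi> y - v \<bullet> y"
      using ev by eventually_elim (use mv in \<open>auto simp: tilt_argmin_def\<close>)
    then show ?thesis unfolding g_def using grad_eq U(3) inb(2) by blast
  qed
  have injm: "inj_on m V'" by (metis gm inj_onI)
  have mcont': "continuous_on V' m" using mcont V'_def continuous_on_subset by blast
  define N where "N = m ` V'"
  have Nopen: "open N" unfolding N_def using invariance_of_domain[OF mcont' V'open injm] .
  have xN: "xbar \<in> N" unfolding N_def using V'0 m0 by force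
  have gN: "g z \<in> V'" "m (g z) = z" if "z \<in> N" for z using that gm unfolding N_def by auto
  have V'V: "V' \<subseteq> V" unfolding V'_def by auto
  have mlip: "dist (m a) (m b) \<le> L * dist a b" if "a \<in> V'" "b \<in> V'" for a b
    using tv(5) that V'V unfolding lipschitz_on_def by blast
  have main: "{y. - g x \<in> graph_deriv g x y} \<noteq> {} \<and> compact {y. - g x \<in> graph_deriv g x y}"
    if xN: "x \<in> N" for x
  proof -
    define w where "w = - g x"
    let ?T = "tangent_cone (graph_of g) (x, g x)"
    have Y: "{y. - g x \<in> graph_deriv g x y} = (\<lambda>y. (y, w)) -` ?T"
      unfolding graph_deriv_def w_def by auto
    have closedY: "closed ((\<lambda>y. (y, w)) -` ?T)"
      by (rule continuous_closed_vimage[OF tc_closed]) (intro continuous_intros)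
    have bnd: "norm y \<le> L * norm w" if yT: "(y, w) \<in> ?T" for y
    proof -
      obtain t ps where tp: "\<forall>k. t k > 0" "t \<longlonglongrightarrow> 0" "ps \<longlonglongrightarrow> (y, w)"
        "\<forall>k. (x, g x) + t k *\<^sub>R ps k \<in> graph_of g"
        using yT unfolding tangent_cone_def by blast
      define a where "a k = fst (ps k)" for k
      define b where "b k = snd (ps k)" for k
      have alim: "a \<longlonglongrightarrow> y" unfolding a_def using tendsto_fst[OF tp(3)] by simp
      have blim: "b \<longlonglongrightarrow> w" unfolding b_def using tendsto_snd[OF tp(3)] by simp
      have gz: "g (x + t k *\<^sub>R a k) = g x + t k *\<^sub>R b k" for k
        using tp(4)[rule_format, of k] unfolding graph_of_def a_def b_def by (cases "ps k") (auto simp: prod_eq_iff)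
      have zlim: "(\<lambda>k. x + t k *\<^sub>R a k) \<longlonglongrightarrow> x"
        using tendsto_add[OF tendsto_const tendsto_scaleR[OF tp(2) alim], of x] by simp
      have evN: "\<forall>\<^sub>F k in sequentially. x + t k *\<^sub>R a k \<in> N"
        using topological_tendstoD[OF zlim Nopen xN] .
      have "\<forall>\<^sub>F k in sequentially. norm (a k) \<le> L * norm (b k)"
        using evN
      proof eventually_elim
        case (elim k)
        have "dist (m (g (x + t k *\<^sub>R a k))) (m (g x)) \<le> L * dist (g (x + t k *\<^sub>R a k)) (g x)"
          using mlip gN elim xN by blast
        then have "norm (t k *\<^sub>R a k) \<le> L * norm (t k *\<^sub>R b k)"
          using gN(2)[OF elim] gN(2)[OF xN] gz[of k] by (simp add: dist_norm)
        then have "t k * norm (a k) \<le> t k * (L * norm (b k))"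
          using tp(1)[rule_format, of k] by (simp add: algebra_simps)
        then show ?case using tp(1)[rule_format, of k] by simp
      qed
      then show ?thesis
        by (rule tendsto_le[OF _ tendsto_mult[OF tendsto_const tendsto_norm[OF blim]] tendsto_norm[OF alim], rotated]) simp
    qed
    have bounded: "bounded ((\<lambda>y. (y, w)) -` ?T)"
      unfolding bounded_iff using bnd by auto
    have nonempty: "(\<lambda>y. (y, w)) -` ?T \<noteq> {}"
    proof -
      have v0: "g x \<in> V'" "m (g x) = x" using gN xN by auto
      obtain e where e: "e > 0" "ball (g x) e \<subseteq> V'" using V'open v0(1) open_contains_ball by blast
      define t where "t k = e / ((norm w + 1) * (real k + 2))" for k :: nat
      have tpos: "t k > 0" for k unfolding t_def using e
        by (intro divide_pos_pos mult_pos_pos) (auto intro: add_nonneg_pos)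
      have tlim: "t \<longlonglongrightarrow> 0"
      proof -
        have "(\<lambda>k. (e / (norm w + 1)) * inverse (real k + 2)) \<longlonglongrightarrow> (e / (norm w + 1)) * 0"
          by (intro tendsto_mult tendsto_const) real_asymp
        then show ?thesis unfolding t_def by (simp add: field_simps)
      qed
      have vin: "g x + t k *\<^sub>R w \<in> V'" for k
      proof -
        have "t k * norm w < e"
        proof -
          have "t k * norm w = e * (norm w / ((norm w + 1) * (real k + 2)))" unfolding t_def by simp
          also have "norm w / ((norm w + 1) * (real k + 2)) < 1"
          proof -
            have "(norm w + 1) * 1 \<le> (norm w + 1) * (real k + 2)"
              by (intro mult_left_mono) auto
            then have "norm w < (norm w + 1) * (real k + 2)" by simp
            moreover have "0 < (norm w + 1) * (real k + 2)"
              by (intro mult_pos_pos) (auto intro: add_nonneg_pos)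
            ultimately show ?thesis by simp
          qed
          then have "e * (norm w / ((norm w + 1) * (real k + 2))) < e * 1"
            using e(1) by (intro mult_strict_left_mono) auto
          finally show ?thesis by simp
        qed
        then show ?thesis using e(2) tpos[of k] by (auto simp: dist_norm)
      qed
      define ws where "ws k = (m (g x + t k *\<^sub>R w) - x) /\<^sub>R t k" for k
      have wsb: "norm (ws k) \<le> L * norm w" for k
      proof -
        have "norm (m (g x + t k *\<^sub>R w) - x) \<le> L * norm (t k *\<^sub>R w)"
          using mlip[OF vin[of k] v0(1)] v0(2) by (simp add: dist_norm)
        then have "norm (m (g x + t k *\<^sub>R w) - x) \<le> t k * (L * norm w)"
          using tpos[of k] by (simp add: algebra_simps)
        moreover have "norm (ws k) = norm (m (g x + t k *\<^sub>R w) - x) / t k"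
          unfolding ws_def using tpos[of k] by (simp add: divide_inverse mult.commute)
        ultimately show ?thesis using tpos[of k] by (simp add: divide_le_eq mult.commute)
      qed
      have "bounded (range ws)" unfolding bounded_iff using wsb by blast
      then obtain y r where yr: "strict_mono r" "(ws \<circ> r) \<longlonglongrightarrow> y"
        using bounded_imp_convergent_subsequence by blast
      have "(y, w) \<in> ?T"
        unfolding tangent_cone_def
      proof (intro CollectI exI[of _ "t \<circ> r"] exI[of _ "\<lambda>k. (ws (r k), w)"] conjI allI)
        show "0 < (t \<circ> r) k" for k using tpos by simp
        show "(t \<circ> r) \<longlonglongrightarrow> 0" using LIMSEQ_subseq_LIMSEQ[OF tlim yr(1)] .
        show "(\<lambda>k. (ws (r k), w)) \<longlonglongrightarrow> (y, w)"
          using tendsto_Pair[OF yr(2) tendsto_const] by (simp add: o_def)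
        show "(x, g x) + (t \<circ> r) k *\<^sub>R (ws (r k), w) \<in> graph_of g" for k
        proof -
          have "x + t (r k) *\<^sub>R ws (r k) = m (g x + t (r k) *\<^sub>R w)"
            unfolding ws_def using tpos[of "r k"] by simp
          moreover have "g (m (g x + t (r k) *\<^sub>R w)) = g x + t (r k) *\<^sub>R w" using gm vin by blast
          ultimately show ?thesis unfolding graph_of_def by auto
        qed
      qed
      then show ?thesis by blast
    qed
    show ?thesis unfolding Y using nonempty bounded closedY compact_eq_bounded_closed by blast
  qed
  show ?thesis using Nopen xN main unfolding g_def by blast
qed

end
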